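(* Let $\mathbb{K}$ be a field of characteristic $0$ and $d\ge1$. If $f:\mathbb{K}^d\to\mathbb{K}$ belongs to a finite-dimensional $\mathbb{K}$-vector space $V$ of functions $\mathbb{K}^d\to\mathbb{K}$ such that $\tau_h(V)\subseteq V$ for all $h\in\mathbb{K}^d$ and $O_P(V)\subseteq V$ for all $P\in\mathrm{GL}(d,\mathbb{K})$, then $f$ is a polynomial; more precisely, $f=P(a_1(x),\dots,a_s(x))$ for some $P\in\mathbb{K}[x_1,\dots,x_s]$ and some additive functions $a_1,\dots,a_s:\mathbb{K}^d\to\mathbb{K}$.
   Context: For $g:\mathbb{K}^d\to\mathbb{K}$, $h\in\mathbb{K}^d$, $P\in\mathrm{GL}(d,\mathbb{K})$: $\tau_hg(x)=g(x+h)$ and $O_Pg(x)=g(Px)$. A function $a:\mathbb{K}^d\to\mathbb{K}$ is additive if $a(x+y)=a(x)+a(y)$ for all $x,y$. A (normal) polynomial $\mathbb{K}^d\to\mathbb{K}$ is an element of the $\mathbb{K}$-algebra of functions generated by the additive functions $\mathbb{K}^d\to\mathbb{K}$ and the constants. *)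

theory Defs
  imports "HOL-Analysis.Analysis"
begin

definition transl :: "'a::field ^ 'n \<Rightarrow> ('a ^ 'n \<Rightarrow> 'a) \<Rightarrow> ('a ^ 'n \<Rightarrow> 'a)" where
  "transl h g = (\<lambda>x. g (x + h))"

definition lin_change :: "'a::field ^ 'n ^ 'n \<Rightarrow> ('a ^ 'n \<Rightarrow> 'a) \<Rightarrow> ('a ^ 'n \<Rightarrow> 'a)" where
  "lin_change P g = (\<lambda>x. g (P *v x))"

definition additive_fun :: "('b::plus \<Rightarrow> 'a::plus) \<Rightarrow> bool" where
  "additive_fun a \<longleftrightarrow> (\<forall>x y. a (x + y) = a x + a y)"

inductive normal_poly :: "('b::plus \<Rightarrow> 'a::comm_ring_1) \<Rightarrow> bool" where
  np_const: "normal_poly (\<lambda>x. c)"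
| np_additive: "additive_fun a \<Longrightarrow> normal_poly a"
| np_add: "normal_poly p \<Longrightarrow> normal_poly q \<Longrightarrow> normal_poly (\<lambda>x. p x + q x)"
| np_mult: "normal_poly p \<Longrightarrow> normal_poly q \<Longrightarrow> normal_poly (\<lambda>x. p x * q x)"

definition fin_dim_fun_space :: "('b \<Rightarrow> 'a::field) set \<Rightarrow> bool" where
  "fin_dim_fun_space V \<longleftrightarrow>
     (\<exists>B. finite B \<and> V = {(\<lambda>x. \<Sum>b\<in>B. c b * b x) | c. True})"

end

theory Submission
  imports Defs "HOL-Library.Function_Algebras" "HOL-Algebra.Algebraic_Closure_Type"
begin


definition evalT :: "'a::field poly \<Rightarrow> 'a ^ 'n \<Rightarrow> ('a ^ 'n \<Rightarrow> 'a) \<Rightarrow> ('a ^ 'n \<Rightarrow> 'a)" where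
  "evalT p h g = (\<lambda>x. \<Sum>i\<le>Polynomial.degree p. Polynomial.coeff p i * g (x + of_nat i *s h))"

lemma evalT_le: "Polynomial.degree p \<le> N \<Longrightarrow> evalT p h g x = (\<Sum>i\<le>N. Polynomial.coeff p i * g (x + of_nat i *s h))"
  unfolding evalT_def
  by (rule sum.mono_neutral_left) (auto simp: coeff_eq_0)

lemma vec_Suc_shift: "x + of_nat (Suc i) *s h = (x + h) + of_nat i *s (h::'a::field^'n)"
  by (simp add: vec_eq_iff algebra_simps)

lemma evalT_pCons: "evalT (pCons a p) h g x = a * g x + evalT p h g (x + h)"
proof -
  have "evalT (pCons a p) h g x = (\<Sum>i\<le>Suc (Polynomial.degree p). Polynomial.coeff (pCons a p) i * g (x + of_nat i *s h))"
    by (rule evalT_le) (simp add: degree_pCons_le)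
  also have "\<dots> = a * g x + (\<Sum>i\<le>Polynomial.degree p. Polynomial.coeff p i * g (x + of_nat (Suc i) *s h))"
    by (subst sum.atMost_Suc_shift) simp
  also have "\<dots> = a * g x + evalT p h g (x + h)"
    by (simp add: evalT_def vec_Suc_shift add.assoc)
  finally show ?thesis .
qed

lemma evalT_0 [simp]: "evalT 0 h g = (\<lambda>x. 0)"
  by (simp add: evalT_def)

lemma evalT_const [simp]: "evalT [:c:] h g = (\<lambda>x. c * g x)"
  by (simp add: evalT_def)

lemma evalT_add: "evalT (p + q) h g x = evalT p h g x + evalT q h g x"
proof -
  let ?N = "max (Polynomial.degree p) (Polynomial.degree q)"
  have "evalT (p + q) h g x = (\<Sum>i\<le>?N. Polynomial.coeff (p+q) i * g (x + of_nat i *s h))"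
    by (rule evalT_le) (simp add: degree_add_le)
  also have "\<dots> = (\<Sum>i\<le>?N. Polynomial.coeff p i * g (x + of_nat i *s h)) + (\<Sum>i\<le>?N. Polynomial.coeff q i * g (x + of_nat i *s h))"
    by (simp add: algebra_simps sum.distrib)
  also have "\<dots> = evalT p h g x + evalT q h g x"
    by (simp add: evalT_le[symmetric])
  finally show ?thesis .
qed

lemma evalT_smult: "evalT (Polynomial.smult c p) h g x = c * evalT p h g x"
proof -
  have "evalT (Polynomial.smult c p) h g x = (\<Sum>i\<le>Polynomial.degree p. Polynomial.coeff (Polynomial.smult c p) i * g (x + of_nat i *s h))"
    by (rule evalT_le) simp
  also have "\<dots> = c * evalT p h g x"
    by (simp add: evalT_def sum_distrib_left algebra_simps)
  finally show ?thesis .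
qed

lemma evalT_minus: "evalT (- p) h g x = - evalT p h g x"
  using evalT_smult[of "-1" p h g x] by simp

lemma evalT_diff: "evalT (p - q) h g x = evalT p h g x - evalT q h g x"
  using evalT_add[of p "-q" h g x] evalT_minus[of q h g x] by simp

lemma evalT_pCons0: "evalT (pCons 0 p) h g x = evalT p h g (x + h)"
  by (simp add: evalT_pCons)

lemma evalT_mult: "evalT (p * q) h g = evalT p h (evalT q h g)"
proof (induction p)
  case 0
  then show ?case by simp
next
  case (pCons a p)
  show ?case
  proof
    fix x
    have "evalT (pCons a p * q) h g x = evalT (Polynomial.smult a q + pCons 0 (p * q)) h g x"
      by simp
    also have "\<dots> = a * evalT q h g x + evalT (p*q) h g (x + h)"
      by (simp add: evalT_add evalT_smult evalT_pCons0)
    also have "\<dots> = evalT (pCons a p) h (evalT q h g) x"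
      by (simp add: evalT_pCons pCons.IH)
    finally show "evalT (pCons a p * q) h g x = evalT (pCons a p) h (evalT q h g) x" .
  qed
qed

lemma evalT_monom: "evalT (Polynomial.monom c n) h g x = c * g (x + of_nat n *s h)"
proof -
  have "evalT (Polynomial.monom c n) h g x = (\<Sum>i\<le>n. Polynomial.coeff (Polynomial.monom c n) i * g (x + of_nat i *s h))"
    by (rule evalT_le) (simp add: degree_monom_le)
  also have "\<dots> = (\<Sum>i\<le>n. if i = n then c * g (x + of_nat n *s h) else 0)"
    by (rule sum.cong) (auto simp: coeff_monom)
  also have "\<dots> = c * g (x + of_nat n *s h)"
    by simp
  finally show ?thesis .
qed

lemma evalT_g_add: "evalT p h (\<lambda>x. g1 x + g2 x) x = evalT p h g1 x + evalT p h g2 x"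
  by (simp add: evalT_def algebra_simps sum.distrib)

lemma evalT_g_scale: "evalT p h (\<lambda>x. c * g x) x = c * evalT p h g x"
  by (simp add: evalT_def algebra_simps sum_distrib_left)

lemma evalT_g_sum: "evalT p h (\<lambda>x. \<Sum>b\<in>B. G b x) x = (\<Sum>b\<in>B. evalT p h (G b) x)"
  by (simp add: evalT_def sum_distrib_left sum.swap[of _ B])

lemma evalT_g_zero: "evalT p h (\<lambda>x. 0) x = 0"
  by (simp add: evalT_def)

lemma evalT_comp: "evalT (pcompose p (Polynomial.monom 1 n)) h g = evalT p (of_nat n *s h) g"
proof (induction p)
  case 0
  then show ?case by simp
next
  case (pCons a p)
  show ?case
  proof
    fix x
    have "evalT (pcompose (pCons a p) (Polynomial.monom 1 n)) h g x
        = evalT ([:a:] + Polynomial.monom 1 n * pcompose p (Polynomial.monom 1 n)) h g x"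
      by (simp add: pcompose_pCons)
    also have "\<dots> = a * g x + evalT (pcompose p (Polynomial.monom 1 n)) h g (x + of_nat n *s h)"
      by (simp add: evalT_add evalT_mult evalT_monom)
    also have "\<dots> = evalT (pCons a p) (of_nat n *s h) g x"
      by (simp add: evalT_pCons pCons.IH)
    finally show "evalT (pcompose (pCons a p) (Polynomial.monom 1 n)) h g x = evalT (pCons a p) (of_nat n *s h) g x" .
  qed
qed

lemma evalT_scale: "evalT p h (\<lambda>x. g (c *s x)) x = evalT p (c *s h) g (c *s x)"
proof -
  have "c *s (x + of_nat i *s h) = c *s x + of_nat i *s (c *s h)" for i
    by (simp add: vec_eq_iff algebra_simps)
  then show ?thesis by (simp add: evalT_def mult.commute)
qed




interpretation fs: Modules.module "\<lambda>(c::'a::field) (f::'b \<Rightarrow> 'a) x. c * f x"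
  by unfold_locales (auto simp: fun_eq_iff algebra_simps)

lemma fun_sum_apply: "(\<Sum>b\<in>B. (f b :: 'b \<Rightarrow> 'a::comm_monoid_add)) x = (\<Sum>b\<in>B. f b x)"
  by (induction B rule: infinite_finite_induct) auto

lemma sum_delta_mult: "(\<Sum>j\<in>(UNIV::'n::finite set). (if i = j then c else 0) * (y j::'a::semiring_1)) = c * y i"
proof -
  have "(\<lambda>j. (if i = j then c else 0) * y j) = (\<lambda>j. if i = j then c * y j else 0)" by auto
  then show ?thesis by (simp only:) (simp add: sum.delta)
qed

lemma mat_mult_vec: "mat (c::'a::field) *v x = c *s x"
  by (simp add: vec_eq_iff matrix_vector_mult_def mat_def sum_delta_mult)

lemma invertible_mat: "(c::'a::field) \<noteq> 0 \<Longrightarrow> invertible (mat c :: 'a^'n^'n)"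
  unfolding invertible_def
  by (rule exI[of _ "mat (inverse c)"]) (simp add: mat_def matrix_matrix_mult_def vec_eq_iff sum_delta_mult)


lemma fvs: "Vector_Spaces.vector_space (\<lambda>(c::'a::field) (f::'b \<Rightarrow> 'a) x. c * f x)"
  using fs.module_axioms by (simp add: module_iff_vector_space)

lemma evalT_sum: "evalT (\<Sum>i\<in>I. p i) h g x = (\<Sum>i\<in>I. evalT (p i) h g x)"
  by (induction I rule: infinite_finite_induct) (auto simp: evalT_add)

lemma evalT_as_sum: "evalT p h g = (\<Sum>i\<le>Polynomial.degree p. (\<lambda>x. Polynomial.coeff p i * g (x + of_nat i *s h)))"
  by (simp add: evalT_def fun_eq_iff fun_sum_apply)

locale tsetup =
  fixes V :: "('a::field_char_0 ^ 'n \<Rightarrow> 'a) set" and B :: "('a ^ 'n \<Rightarrow> 'a) set"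
  assumes finB: "finite B" and VB: "V = fs.span B"
    and tr: "\<And>h g. g \<in> V \<Longrightarrow> (\<lambda>x. g (x + h)) \<in> V"
    and sc: "\<And>c g. c \<noteq> 0 \<Longrightarrow> g \<in> V \<Longrightarrow> (\<lambda>x. g (c *s x)) \<in> V"
begin

lemma V_add: "g1 \<in> V \<Longrightarrow> g2 \<in> V \<Longrightarrow> (\<lambda>x. g1 x + g2 x) \<in> V"
  using fs.span_add[of g1 B g2] by (simp add: VB plus_fun_def)

lemma V_scale: "g \<in> V \<Longrightarrow> (\<lambda>x. c * g x) \<in> V"
  using fs.span_scale[of g B c] by (simp add: VB)

lemma V_zero: "(\<lambda>x. 0) \<in> V"
  using fs.span_zero[of B] by (simp add: VB zero_fun_def)

lemma V_sum: "(\<And>i. i \<in> I \<Longrightarrow> G i \<in> V) \<Longrightarrow> (\<lambda>x. \<Sum>i\<in>I. G i x) \<in> V"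
  using fs.span_sum[of I G B] by (simp add: VB fun_sum_apply[symmetric])

lemma evalT_V: "g \<in> V \<Longrightarrow> evalT p h g \<in> V"
  unfolding evalT_def
  by (intro V_sum V_scale tr)

definition Ann :: "'a ^ 'n \<Rightarrow> 'a poly set" where
  "Ann h = {p. \<forall>g\<in>V. evalT p h g = (\<lambda>x. 0)}"

lemma Ann_mult: "q \<in> Ann h \<Longrightarrow> p * q \<in> Ann h"
  by (auto simp: Ann_def evalT_mult evalT_g_zero)

lemma Ann_add: "p \<in> Ann h \<Longrightarrow> q \<in> Ann h \<Longrightarrow> p + q \<in> Ann h"
  by (auto simp: Ann_def fun_eq_iff evalT_add)

lemma Ann_diff: "p \<in> Ann h \<Longrightarrow> q \<in> Ann h \<Longrightarrow> p - q \<in> Ann h"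
  by (auto simp: Ann_def fun_eq_iff evalT_diff)

lemma Ann_scale:
  assumes "c \<noteq> 0" "p \<in> Ann h"
  shows "p \<in> Ann (c *s h)"
  unfolding Ann_def
proof (intro CollectI ballI ext)
  fix g y assume g: "g \<in> V"
  have "(\<lambda>x. g (c *s x)) \<in> V" using sc[OF assms(1) g] .
  then have "evalT p h (\<lambda>x. g (c *s x)) (inverse c *s y) = 0"
    using assms(2) by (auto simp: Ann_def fun_eq_iff)
  moreover have "c *s (inverse c *s y) = y"
    using assms(1) by (simp add: vec_eq_iff)
  ultimately show "evalT p (c *s h) g y = 0"
    by (simp add: evalT_scale)
qed

lemma Ann_scale_iff:
  assumes "c \<noteq> 0"
  shows "p \<in> Ann (c *s h) \<longleftrightarrow> p \<in> Ann h"
proof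
  assume "p \<in> Ann (c *s h)"
  from Ann_scale[OF _ this, of "inverse c"] assms show "p \<in> Ann h"
    by (simp add: vec_eq_iff)
qed (rule Ann_scale[OF assms])

lemma Ann_comp:
  assumes "n \<ge> 1" "p \<in> Ann h"
  shows "pcompose p (Polynomial.monom 1 n) \<in> Ann h"
proof -
  have "of_nat n \<noteq> (0::'a)" using assms(1) by simp
  then have "p \<in> Ann (of_nat n *s h)" using Ann_scale assms(2) by blast
  then show ?thesis by (simp add: Ann_def evalT_comp)
qed

lemma annihilate_one:
  assumes g: "g \<in> V"
  shows "\<exists>p. p \<noteq> 0 \<and> Polynomial.degree p \<le> card B \<and> evalT p h g = (\<lambda>x. 0)"
proof -
  define m where "m = card B"
  define T where "T i = (\<lambda>x. g (x + of_nat i *s h))" for i :: nat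
  show ?thesis
  proof (cases "inj_on T {..m}")
    case False
    then obtain i j where ij: "i \<le> m" "j \<le> m" "i \<noteq> j" "T i = T j"
      unfolding inj_on_def by auto
    define p where "p = Polynomial.monom (1::'a) i - Polynomial.monom 1 j"
    have "Polynomial.coeff p i = 1" using ij by (simp add: p_def coeff_monom)
    then have "p \<noteq> 0" by auto
    moreover have "Polynomial.degree p \<le> m"
      unfolding p_def using ij by (intro degree_diff_le) (simp_all add: degree_monom_eq)
    moreover have "evalT p h g = (\<lambda>x. 0)"
    proof
      fix x
      have "T i x = T j x" using ij by simp
      then show "evalT p h g x = 0"
        by (simp add: p_def evalT_diff evalT_monom T_def)
    qed
    ultimately show ?thesis unfolding m_def by blast
  next
    case True
    define S where "S = T ` {..m}"
    have cardS: "card S = Suc m" using True by (simp add: S_def card_image)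
    have finS: "finite S" by (simp add: S_def)
    have "S \<subseteq> fs.span B" unfolding S_def T_def using tr[OF g] VB by auto
    then have "fs.dependent S"
      using Vector_Spaces.vector_space.independent_span_bound[OF fvs finB, of S] cardS unfolding m_def by auto
    then obtain u where u: "\<exists>v\<in>S. u v \<noteq> 0" "(\<Sum>v\<in>S. (\<lambda>x. u v * v x)) = 0"
      using fs.dependent_finite[OF finS] by auto
    define p where "p = (\<Sum>i\<le>m. Polynomial.monom (u (T i)) i)"
    have cp: "Polynomial.coeff p i = u (T i)" if "i \<le> m" for i
    proof -
      have "Polynomial.coeff p i = (\<Sum>j\<le>m. if j = i then u (T j) else 0)"
        unfolding p_def coeff_sum by (intro sum.cong) (auto simp: coeff_monom)
      also have "\<dots> = u (T i)" using that by simp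
      finally show ?thesis .
    qed
    from u(1) obtain i where i: "i \<le> m" "u (T i) \<noteq> 0" unfolding S_def by auto
    have "p \<noteq> 0" using cp[OF i(1)] i(2) by auto
    moreover have "Polynomial.degree p \<le> m"
      unfolding p_def by (intro degree_sum_le) (auto intro: order.trans[OF degree_monom_le])
    moreover have "evalT p h g = (\<lambda>x. 0)"
    proof
      fix x
      have "evalT p h g x = (\<Sum>i\<le>m. u (T i) * T i x)"
        unfolding p_def evalT_sum by (simp add: evalT_monom T_def)
      also have "\<dots> = (\<Sum>v\<in>S. u v * v x)"
        unfolding S_def by (subst sum.reindex[OF True]) simp
      also have "\<dots> = 0" using fun_cong[OF u(2), of x] by (simp add: fun_sum_apply)
      finally show "evalT p h g x = 0" .
    qed
    ultimately show ?thesis unfolding m_def by blast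
  qed
qed

end




lemma map_ac_add: "map_poly to_ac (p + q) = map_poly to_ac p + map_poly to_ac (q :: 'a::field poly)"
  by (rule poly_eqI) (simp add: coeff_map_poly)

lemma map_ac_diff: "map_poly to_ac (p - q) = map_poly to_ac p - map_poly to_ac (q :: 'a::field poly)"
  by (rule poly_eqI) (simp add: coeff_map_poly)

lemma map_ac_mult: "map_poly to_ac (p * q) = map_poly to_ac p * map_poly to_ac (q :: 'a::field poly)"
  by (rule poly_eqI) (simp add: coeff_map_poly coeff_mult to_ac_sum)

lemma map_ac_1: "map_poly to_ac (1 :: 'a::field poly) = 1"
  by (rule poly_eqI) (simp add: coeff_map_poly)

lemma map_ac_power: "map_poly to_ac (p ^ n) = map_poly to_ac (p :: 'a::field poly) ^ n"
  by (induction n) (simp_all add: map_ac_mult map_ac_1)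

lemma map_ac_monom: "map_poly to_ac (Polynomial.monom c n) = Polynomial.monom (to_ac (c :: 'a::field)) n"
  by (simp add: map_poly_monom)

lemma map_ac_pcompose: "map_poly to_ac (pcompose p q) = pcompose (map_poly to_ac p) (map_poly to_ac (q :: 'a::field poly))"
  by (induction p) (simp_all add: pcompose_pCons map_poly_pCons map_ac_add map_ac_mult)

lemma degree_map_ac: "Polynomial.degree (map_poly to_ac (p :: 'a::field poly)) = Polynomial.degree p"
  by (rule degree_map_poly) simp

lemma map_ac_eq_0: "map_poly to_ac (p :: 'a::field poly) = 0 \<longleftrightarrow> p = 0"
  by (rule map_poly_eq_0_iff) auto

lemma dvd_map_ac:
  fixes p q :: "'a::field poly"
  assumes "map_poly to_ac p dvd map_poly to_ac q" "p \<noteq> 0"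
  shows "p dvd q"
proof (rule ccontr)
  assume nd: "\<not> p dvd q"
  define r where "r = q mod p"
  have r0: "r \<noteq> 0" using nd by (simp add: r_def mod_eq_0_iff_dvd)
  have "q = p * (q div p) + r" by (simp add: r_def)
  then have "map_poly to_ac q = map_poly to_ac (p * (q div p) + r)"
    by (rule arg_cong)
  then have "map_poly to_ac q = map_poly to_ac p * map_poly to_ac (q div p) + map_poly to_ac r"
    by (simp only: map_ac_add map_ac_mult)
  then have eqr: "map_poly to_ac r = map_poly to_ac q - map_poly to_ac p * map_poly to_ac (q div p)"
    by simp
  have "map_poly to_ac p dvd map_poly to_ac q - map_poly to_ac p * map_poly to_ac (q div p)"
    by (intro dvd_diff assms(1)) simp
  then have dv: "map_poly to_ac p dvd map_poly to_ac r" by (simp only: eqr)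
  have "map_poly to_ac r \<noteq> 0" using r0 by (simp add: map_ac_eq_0)
  from dvd_imp_degree_le[OF dv this] have "Polynomial.degree p \<le> Polynomial.degree r"
    by (simp only: degree_map_ac)
  moreover have "Polynomial.degree r < Polynomial.degree p"
    using degree_mod_less[OF assms(2), of q] r0 by (simp add: r_def)
  ultimately show False by simp
qed

lemma prod_mset_dvd_power:
  assumes "\<And>x. x \<in># A \<Longrightarrow> f x dvd (q :: 'b::comm_monoid_mult)"
  shows "(\<Prod>x\<in>#A. f x) dvd q ^ size A"
  using assms
proof (induction A)
  case empty
  then show ?case by simp
next
  case (add x A)
  then show ?case by (simp add: mult_dvd_mono)
qed

lemma periodic_root:
  fixes a :: "'b::field"
  assumes fin: "finite R" and a: "a \<in> R" and a0: "a \<noteq> 0" and pw: "\<And>n. n \<ge> 1 \<Longrightarrow> a ^ n \<in> R"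
  shows "\<exists>k\<ge>1. a ^ k = 1"
proof -
  have "\<not> inj_on (\<lambda>i. a ^ i) {1..Suc (card R)}"
  proof
    assume inj: "inj_on (\<lambda>i. a ^ i) {1..Suc (card R)}"
    have "(\<lambda>i. a ^ i) ` {1..Suc (card R)} \<subseteq> R" using pw by auto
    from card_inj_on_le[OF inj this fin] show False by simp
  qed
  then obtain i j where ij: "i \<in> {1..Suc (card R)}" "j \<in> {1..Suc (card R)}" "i \<noteq> j" "a ^ i = a ^ j"
    unfolding inj_on_def by blast
  have "\<exists>i j. i < j \<and> a ^ i = a ^ j"
    using ij by (metis linorder_neqE_nat)
  then obtain i j where ij2: "i < j" "a ^ i = a ^ j" by blast
  have "a ^ j = a ^ i * a ^ (j - i)" using ij2(1) by (simp add: power_add[symmetric])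
  with ij2(2) a0 have "a ^ (j - i) = 1" by simp
  then show ?thesis using ij2(1) by (intro exI[of _ "j - i"]) simp
qed

lemma roots_unity:
  fixes \<mu> :: "'a::field_char_0 poly"
  assumes nz: "\<mu> \<noteq> 0" and c0: "poly \<mu> 0 \<noteq> 0"
    and dv: "\<And>n. n \<ge> 1 \<Longrightarrow> \<mu> dvd pcompose \<mu> (Polynomial.monom 1 n)"
  shows "\<exists>N\<ge>1. \<mu> dvd (Polynomial.monom 1 N - 1) ^ Polynomial.degree \<mu>"
proof -
  define m where "m = map_poly to_ac \<mu>"
  have m0: "m \<noteq> 0" using nz by (simp add: m_def map_ac_eq_0)
  define R where "R = {a. poly m a = 0}"
  have finR: "finite R" using poly_roots_finite[OF m0] by (simp add: R_def)
  have nz0: "a \<noteq> 0" if "a \<in> R" for a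
  proof
    assume "a = 0"
    with that have "poly m 0 = 0" by (simp add: R_def)
    then have "to_ac (Polynomial.coeff \<mu> 0) = 0" by (simp add: m_def poly_0_coeff_0 coeff_map_poly)
    then show False using c0 by (simp add: poly_0_coeff_0)
  qed
  have pw: "a ^ n \<in> R" if aR: "a \<in> R" and n1: "n \<ge> 1" for a n
  proof -
    obtain w where w: "pcompose \<mu> (Polynomial.monom 1 n) = \<mu> * w" using dv[OF n1] by (elim dvdE)
    have "poly m (a ^ n) = poly (map_poly to_ac (pcompose \<mu> (Polynomial.monom 1 n))) a"
      by (simp add: m_def map_ac_pcompose poly_pcompose map_ac_monom poly_monom)
    also have "\<dots> = poly m a * poly (map_poly to_ac w) a"
      by (simp add: w map_ac_mult m_def)
    also have "\<dots> = 0" using aR by (simp add: R_def)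
    finally show ?thesis by (simp add: R_def)
  qed
  have "\<forall>a\<in>R. \<exists>k\<ge>1. a ^ k = 1"
    using periodic_root[OF finR _ nz0 pw] by blast
  then obtain k where k: "\<And>a. a \<in> R \<Longrightarrow> k a \<ge> 1 \<and> a ^ k a = 1" by metis
  define N where "N = (\<Prod>a\<in>R. k a)"
  have N1: "N \<ge> 1" unfolding N_def using k
    by (intro prod_ge_1) auto
  have aN: "a ^ N = 1" if "a \<in> R" for a
  proof -
    have "k a dvd N" unfolding N_def using finR that by (rule dvd_prodI)
    then obtain t where "N = k a * t" by (elim dvdE)
    then show ?thesis using k[OF that] by (simp add: power_mult)
  qed
  obtain A where A: "size A = Polynomial.degree m" "m = Polynomial.smult (Polynomial.lead_coeff m) (\<Prod>x\<in>#A. [:-x, 1:])"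
    using alg_closed_imp_factorization[OF m0] by blast
  have "(\<Prod>x\<in>#A. [:-x, 1:]) dvd (Polynomial.monom 1 N - 1) ^ size A"
  proof (rule prod_mset_dvd_power)
    fix x assume x: "x \<in># A"
    have "[:-x, 1:] dvd (\<Prod>x\<in>#A. [:-x, 1:])"
      using x by (intro dvd_prod_mset) auto
    then have "[:-x, 1:] dvd Polynomial.smult (Polynomial.lead_coeff m) (\<Prod>x\<in>#A. [:-x, 1:])" by (rule dvd_smult)
    then have "[:-x, 1:] dvd m" using A(2)[symmetric] by (simp only:)
    then have "x \<in> R" by (simp add: R_def poly_eq_0_iff_dvd)
    then have "poly (Polynomial.monom 1 N - 1) x = 0" using aN by (simp add: poly_monom)
    then show "[:-x, 1:] dvd Polynomial.monom 1 N - 1" using poly_eq_0_iff_dvd by blast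
  qed
  moreover have "Polynomial.lead_coeff m \<noteq> 0" using m0 by simp
  ultimately have "Polynomial.smult (Polynomial.lead_coeff m) (\<Prod>x\<in>#A. [:-x, 1:]) dvd (Polynomial.monom 1 N - 1) ^ Polynomial.degree m"
    using A(1) by (simp add: smult_dvd_iff)
  then have "m dvd (Polynomial.monom 1 N - 1) ^ Polynomial.degree m"
    using A(2)[symmetric] by (simp only:)
  then have "map_poly to_ac \<mu> dvd map_poly to_ac ((Polynomial.monom 1 N - 1) ^ Polynomial.degree \<mu>)"
    by (simp add: m_def degree_map_ac map_ac_power map_ac_diff map_ac_monom map_ac_1)
  then have "\<mu> dvd (Polynomial.monom 1 N - 1) ^ Polynomial.degree \<mu>" using dvd_map_ac nz by blast
  then show ?thesis using N1 by blast
qed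




lemma pcompose_power_left: "pcompose (p ^ n) q = pcompose p q ^ n"
  by (induction n) (simp_all add: pcompose_mult pcompose_1)

lemma evalT_at0: "evalT p 0 g x = poly p 1 * g x"
  by (simp add: evalT_def poly_altdef sum_distrib_right)

lemma fun_sum_apply_eta: "(\<Sum>b\<in>B. (f b :: 'b \<Rightarrow> 'a::comm_monoid_add)) = (\<lambda>x. \<Sum>b\<in>B. f b x)"
  by (rule ext) (simp add: fun_sum_apply)

lemma pcompose_lin: "pcompose [:-1, 1:] q = q - (1::'a::comm_ring_1 poly)"
  by (simp add: pcompose_pCons poly_eq_iff coeff_pCons split: nat.splits)

context tsetup
begin

lemma Ann_nonzero: "\<exists>p\<in>Ann h. p \<noteq> 0 \<and> Polynomial.degree p \<le> card B * card B"
proof -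
  have "\<forall>b\<in>B. \<exists>p. p \<noteq> 0 \<and> Polynomial.degree p \<le> card B \<and> evalT p h b = (\<lambda>x. 0)"
    using annihilate_one VB fs.span_base by blast
  then obtain pb where pb: "\<And>b. b \<in> B \<Longrightarrow> pb b \<noteq> 0 \<and> Polynomial.degree (pb b) \<le> card B \<and> evalT (pb b) h b = (\<lambda>x. 0)"
    by metis
  define P where "P = (\<Prod>b\<in>B. pb b)"
  have "P \<noteq> 0" unfolding P_def using pb finB by auto
  moreover have "Polynomial.degree P \<le> card B * card B"
  proof -
    have "Polynomial.degree P \<le> (\<Sum>b\<in>B. Polynomial.degree (pb b))"
      unfolding P_def using degree_prod_sum_le[OF finB, of pb] by (simp add: o_def)
    also have "\<dots> \<le> (\<Sum>b\<in>B. card B)" using pb by (intro sum_mono) auto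
    also have "\<dots> = card B * card B" by simp
    finally show ?thesis .
  qed
  moreover have "P \<in> Ann h"
    unfolding Ann_def
  proof (intro CollectI ballI ext)
    fix g x assume g: "g \<in> V"
    have Pb: "evalT P h b = (\<lambda>x. 0)" if b: "b \<in> B" for b
    proof -
      have "P = (\<Prod>b'\<in>B - {b}. pb b') * pb b"
        unfolding P_def using prod.remove[OF finB b, of pb] by (simp add: mult.commute)
      moreover have e: "evalT (pb b) h b = (\<lambda>x. 0)" using pb[OF b] by blast
      ultimately show ?thesis by (simp add: evalT_mult e fun_eq_iff evalT_g_zero)
    qed
    from g obtain u where u: "g = (\<Sum>b\<in>B. (\<lambda>x. u b * b x))"
      using fs.span_finite[OF finB] VB by auto
    have "evalT P h g x = (\<Sum>b\<in>B. u b * evalT P h b x)"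
      unfolding u fun_sum_apply_eta by (simp add: evalT_g_sum evalT_g_scale)
    also have "\<dots> = 0" using Pb by simp
    finally show "evalT P h g x = 0" .
  qed
  ultimately show ?thesis by blast
qed



lemma unipotent_nz:
  assumes h0: "h \<noteq> 0"
  shows "[:-1, 1:] ^ (card B * card B + 1) \<in> Ann h"
proof -
  define M where "M = card B * card B"
  define P where "P d \<longleftrightarrow> (\<exists>p\<in>Ann h. p \<noteq> 0 \<and> Polynomial.degree p = d)" for d
  have exP: "\<exists>d. P d \<and> d \<le> M" using Ann_nonzero[of h] unfolding P_def M_def by blast
  define d where "d = (LEAST d. P d)"
  have Pd: "P d" unfolding d_def using exP by (metis LeastI)
  have dmin: "d \<le> Polynomial.degree q" if "q \<in> Ann h" "q \<noteq> 0" for q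
    unfolding d_def using that by (intro Least_le) (auto simp: P_def)
  have dM: "d \<le> M" using exP dmin unfolding P_def by (metis order.trans)
  from Pd obtain \<mu> where mu: "\<mu> \<in> Ann h" "\<mu> \<noteq> 0" "Polynomial.degree \<mu> = d" unfolding P_def by blast
  have dvdAnn: "\<mu> dvd q" if q: "q \<in> Ann h" for q
  proof (rule ccontr)
    assume nd: "\<not> \<mu> dvd q"
    define r where "r = q mod \<mu>"
    have r0: "r \<noteq> 0" using nd by (simp add: r_def mod_eq_0_iff_dvd)
    have "q - q div \<mu> * \<mu> \<in> Ann h" by (intro Ann_diff q Ann_mult mu(1))
    then have "r \<in> Ann h" by (simp add: r_def minus_div_mult_eq_mod)
    then have "d \<le> Polynomial.degree r" using dmin r0 by blast
    moreover have "Polynomial.degree r < Polynomial.degree \<mu>"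
      using degree_mod_less'[OF mu(2)] r0 by (simp add: r_def)
    ultimately show False using mu(3) by simp
  qed
  have c0: "poly \<mu> 0 \<noteq> 0"
  proof
    assume z: "poly \<mu> 0 = 0"
    obtain a \<nu> where an: "\<mu> = pCons a \<nu>" by (cases \<mu>) auto
    have a0: "a = 0" using z an by simp
    have nu0: "\<nu> \<noteq> 0" using mu(2) an a0 by auto
    have "\<nu> \<in> Ann h"
      unfolding Ann_def
    proof (intro CollectI ballI ext)
      fix g y assume g: "g \<in> V"
      have "evalT \<mu> h g (y - h) = 0" using mu(1) g by (simp add: Ann_def)
      then show "evalT \<nu> h g y = 0" by (simp add: an a0 evalT_pCons0)
    qed
    then have "d \<le> Polynomial.degree \<nu>" using dmin nu0 by blast
    moreover have "Polynomial.degree \<mu> = Suc (Polynomial.degree \<nu>)" using an nu0 by simp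
    ultimately show False using mu(3) by simp
  qed
  have dv: "\<mu> dvd pcompose \<mu> (Polynomial.monom 1 n)" if "n \<ge> 1" for n
    using dvdAnn Ann_comp[OF that mu(1)] by blast
  obtain N where N: "N \<ge> 1" "\<mu> dvd (Polynomial.monom 1 N - 1) ^ Polynomial.degree \<mu>"
    using roots_unity[OF mu(2) c0 dv] by blast
  from N(2) obtain w where w: "(Polynomial.monom 1 N - 1) ^ Polynomial.degree \<mu> = \<mu> * w" by (elim dvdE)
  have "w * \<mu> \<in> Ann h" by (rule Ann_mult[OF mu(1)])
  then have Q: "pcompose ([:-1, 1:] ^ d) (Polynomial.monom 1 N) \<in> Ann h"
    using w mu(3) by (simp add: pcompose_power_left pcompose_lin mult.commute)
  define c :: 'a where "c = inverse (of_nat N)"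
  have cN: "of_nat N * c = 1" using N(1) by (simp add: c_def)
  have c0': "c \<noteq> 0" using N(1) by (simp add: c_def)
  have "pcompose ([:-1, 1:] ^ d) (Polynomial.monom 1 N) \<in> Ann (c *s h)"
    using Ann_scale_iff[OF c0'] Q by blast
  moreover have "of_nat N *s (c *s h) = h" using cN by (simp add: vec_eq_iff mult.assoc[symmetric])
  ultimately have Dd: "[:-1, 1:] ^ d \<in> Ann h"
    by (simp add: Ann_def evalT_comp)
  have "[:-1, 1:] ^ (M + 1 - d) * [:-1, 1:] ^ d \<in> Ann h" by (rule Ann_mult[OF Dd])
  moreover have "M + 1 - d + d = M + 1" using dM by simp
  ultimately show ?thesis by (simp add: power_add[symmetric] M_def)
qed

lemma unipotent:
  assumes g: "g \<in> V"
  shows "evalT ([:-1, 1:] ^ (card B * card B + 1)) h g = (\<lambda>x. 0)"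
proof (cases "h = 0")
  case True
  then show ?thesis by (simp add: evalT_at0 fun_eq_iff)
next
  case False
  then show ?thesis using unipotent_nz g by (simp add: Ann_def)
qed

end




definition bp :: "nat \<Rightarrow> 'a::field_char_0 poly" where
  "bp k = Polynomial.smult (inverse (fact k)) (\<Prod>i<k. [:- of_nat i, 1:])"

lemma poly_bp: "poly (bp k) (of_nat n) = (of_nat (n choose k) :: 'a::field_char_0)"
proof -
  have "poly (bp k) (of_nat n) = (\<Prod>i<k. (of_nat n :: 'a) - of_nat i) / fact k"
    by (simp add: bp_def poly_prod divide_inverse mult.commute)
  also have "\<dots> = (of_nat n gchoose k)"
    by (simp add: gbinomial_prod_rev atLeast0LessThan)
  also have "\<dots> = of_nat (n choose k)" by (simp add: binomial_gbinomial)
  finally show ?thesis .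
qed

lemma degree_bp: "Polynomial.degree (bp k :: 'a::field_char_0 poly) \<le> k"
proof -
  have "Polynomial.degree (\<Prod>i<k. [:- of_nat i, 1::'a:]) \<le> (\<Sum>i<k. Polynomial.degree [:- of_nat i, 1::'a:])"
    using degree_prod_sum_le[of "{..<k}" "\<lambda>i. [:- of_nat i, 1::'a:]"] by (simp add: o_def)
  also have "\<dots> = k" by simp
  finally show ?thesis by (simp add: bp_def)
qed

lemma poly_eq_on_nat:
  fixes p q :: "'a::field_char_0 poly"
  assumes "\<And>n. poly p (of_nat n) = poly q (of_nat n)"
  shows "p = q"
proof (rule ccontr)
  assume "p \<noteq> q"
  then have "p - q \<noteq> 0" by simp
  from poly_roots_finite[OF this] have "finite {x. poly (p - q) x = 0}" .
  moreover have "range (of_nat :: nat \<Rightarrow> 'a) \<subseteq> {x. poly (p - q) x = 0}" using assms by auto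
  ultimately have "finite (range (of_nat :: nat \<Rightarrow> 'a))" by (rule finite_subset[rotated])
  moreover have "inj (of_nat :: nat \<Rightarrow> 'a)" by (simp add: inj_on_def)
  ultimately show False using finite_imageD by (metis infinite_UNIV_nat)
qed

lemma coeff_pcompose_scale: "Polynomial.coeff (pcompose (p :: 'a::comm_ring_1 poly) [:0, c:]) j = c ^ j * Polynomial.coeff p j"
proof (induction p arbitrary: j)
  case 0
  then show ?case by simp
next
  case (pCons a p)
  then show ?case by (cases j) (simp_all add: pcompose_pCons coeff_pCons mult.assoc)
qed

lemma np_scale: "normal_poly p \<Longrightarrow> normal_poly (\<lambda>x. c * p x)"
  by (rule np_mult[OF np_const])

lemma np_sum: "finite I \<Longrightarrow> (\<And>i. i \<in> I \<Longrightarrow> normal_poly (F i)) \<Longrightarrow> normal_poly (\<lambda>x. \<Sum>i\<in>I. F i x)"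
proof (induction I rule: finite_induct)
  case empty
  then show ?case by (simp add: np_const)
next
  case (insert a I)
  then show ?case by (simp add: np_add)
qed

context tsetup
begin

definition Dn :: nat where "Dn = card B * card B + 1"

lemma Dn_pos: "Dn \<ge> 1" by (simp add: Dn_def)

lemma unipotent': "g \<in> V \<Longrightarrow> evalT ([:-1, 1:] ^ Dn) h g = (\<lambda>x. 0)"
  unfolding Dn_def by (rule unipotent)

definition Dl :: "nat \<Rightarrow> 'a ^ 'n \<Rightarrow> ('a ^ 'n \<Rightarrow> 'a) \<Rightarrow> ('a ^ 'n \<Rightarrow> 'a)" where
  "Dl k y g = evalT ([:-1, 1:] ^ k) y g"

lemma Dl_zero: "k \<ge> Dn \<Longrightarrow> g \<in> V \<Longrightarrow> Dl k y g = (\<lambda>x. 0)"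
proof -
  assume k: "k \<ge> Dn" and g: "g \<in> V"
  have pw: "[:-1, 1:] ^ k = [:-1, 1:] ^ (k - Dn) * [:-1, 1::'a:] ^ Dn"
    using k by (metis le_add_diff_inverse2 power_add)
  have e: "evalT ([:-1, 1:] ^ Dn) y g = (\<lambda>x. 0)" using unipotent'[OF g] .
  have "Dl k y g = evalT ([:-1, 1:] ^ (k - Dn)) y (evalT ([:-1, 1:] ^ Dn) y g)"
    unfolding Dl_def pw evalT_mult ..
  also have "\<dots> = evalT ([:-1, 1:] ^ (k - Dn)) y (\<lambda>x. 0)" by (simp only: e)
  also have "\<dots> = (\<lambda>x. 0)" by (simp add: fun_eq_iff evalT_g_zero)
  finally show ?thesis .
qed

lemma expand:
  assumes g: "g \<in> V"
  shows "g (x + of_nat n *s y) = (\<Sum>k<Dn. of_nat (n choose k) * Dl k y g x)"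
proof -
  define F where "F k = of_nat (n choose k) * Dl k y g x" for k
  have "[:-1, 1:] + 1 = [:0, 1::'a:]" by (simp add: one_pCons)
  then have "(Polynomial.monom (1::'a) n) = ([:-1, 1:] + 1) ^ n"
    by (simp add: monom_altdef)
  also have "\<dots> = (\<Sum>k\<le>n. of_nat (n choose k) * [:-1, 1:] ^ k * 1 ^ (n - k))"
    by (rule binomial_ring)
  finally have m: "Polynomial.monom (1::'a) n = (\<Sum>k\<le>n. Polynomial.smult (of_nat (n choose k)) ([:-1, 1:] ^ k))"
    by (simp add: of_nat_poly)
  have "g (x + of_nat n *s y) = evalT (Polynomial.monom 1 n) y g x"
    by (simp add: evalT_monom)
  also have "\<dots> = (\<Sum>k\<le>n. F k)"
    unfolding m evalT_sum by (simp add: evalT_smult F_def Dl_def)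
  also have "\<dots> = (\<Sum>k<n + Dn. F k)"
    using Dn_pos by (intro sum.mono_neutral_left) (auto simp: F_def)
  also have "\<dots> = (\<Sum>k<Dn. F k)"
    by (rule sum.mono_neutral_right) (auto simp: F_def Dl_zero[OF _ g])
  finally show ?thesis by (simp add: F_def)
qed

definition PT :: "'a ^ 'n \<Rightarrow> ('a ^ 'n \<Rightarrow> 'a) \<Rightarrow> 'a ^ 'n \<Rightarrow> 'a poly" where
  "PT y g x = (\<Sum>k<Dn. Polynomial.smult (Dl k y g x) (bp k))"

definition Q :: "nat \<Rightarrow> 'a ^ 'n \<Rightarrow> ('a ^ 'n \<Rightarrow> 'a) \<Rightarrow> ('a ^ 'n \<Rightarrow> 'a)" where
  "Q j y g = (\<lambda>x. Polynomial.coeff (PT y g x) j)"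

lemma Q_apply: "Q j y g x = Polynomial.coeff (PT y g x) j"
  by (simp add: Q_def)

lemma poly_PT: "g \<in> V \<Longrightarrow> poly (PT y g x) (of_nat n) = g (x + of_nat n *s y)"
  by (simp add: PT_def poly_sum poly_bp expand mult.commute)

lemma degree_PT: "Polynomial.degree (PT y g x) < Dn"
proof -
  have "Polynomial.degree (PT y g x) \<le> Dn - 1"
    unfolding PT_def
    by (intro degree_sum_le) (auto intro: order.trans[OF degree_smult_le] order.trans[OF degree_bp])
  then show ?thesis using Dn_pos by linarith
qed

lemma Q_def2: "Q j y g = (\<lambda>x. \<Sum>k<Dn. Dl k y g x * Polynomial.coeff (bp k) j)"
  by (simp add: Q_def PT_def coeff_sum)

lemma Q_V: "g \<in> V \<Longrightarrow> Q j y g \<in> V"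
  unfolding Q_def2 Dl_def
  by (intro V_sum) (simp add: mult.commute V_scale evalT_V)

lemma Q_high: "j \<ge> Dn \<Longrightarrow> Q j y g = (\<lambda>x. 0)"
proof
  fix x assume j: "j \<ge> Dn"
  have "Polynomial.degree (PT y g x) < j" using degree_PT[of y g x] j by linarith
  then show "Q j y g x = 0" by (simp add: Q_def coeff_eq_0)
qed

lemma Q_zero: "Q j y (\<lambda>x. 0) = (\<lambda>x. 0)"
  by (simp add: Q_def2 Dl_def evalT_g_zero)

lemma Q_lin: "Q j y (\<lambda>x. \<Sum>b\<in>A. c b * G b x) x = (\<Sum>b\<in>A. c b * Q j y (G b) x)"
proof -
  have d: "Dl k y (\<lambda>x. \<Sum>b\<in>A. c b * G b x) x = (\<Sum>b\<in>A. c b * Dl k y (G b) x)" for k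
    by (simp add: Dl_def evalT_g_sum evalT_g_scale)
  have "Q j y (\<lambda>x. \<Sum>b\<in>A. c b * G b x) x = (\<Sum>k<Dn. (\<Sum>b\<in>A. c b * Dl k y (G b) x) * Polynomial.coeff (bp k) j)"
    by (simp only: Q_def2 d)
  also have "\<dots> = (\<Sum>b\<in>A. c b * (\<Sum>k<Dn. Dl k y (G b) x * Polynomial.coeff (bp k) j))"
    by (simp only: sum_distrib_left sum_distrib_right mult.assoc) (rule sum.swap)
  also have "\<dots> = (\<Sum>b\<in>A. c b * Q j y (G b) x)" by (simp only: Q_def2)
  finally show ?thesis .
qed

lemma poly_PT_sum: "poly (PT y g x) a = (\<Sum>l<Dn. a ^ l * Q l y g x)"
proof -
  have "poly (PT y g x) a = (\<Sum>l\<le>Polynomial.degree (PT y g x). a ^ l * Q l y g x)"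
    by (simp add: Q_def poly_altdef mult.commute)
  also have "\<dots> = (\<Sum>l<Dn. a ^ l * Q l y g x)"
    using degree_PT[of y g x]
    by (intro sum.mono_neutral_left) (auto simp: Q_def coeff_eq_0)
  finally show ?thesis .
qed

lemma Q0: "g \<in> V \<Longrightarrow> Q 0 y g = g"
proof
  fix x assume g: "g \<in> V"
  have "Q 0 y g x = poly (PT y g x) (of_nat 0)" by (simp add: Q_def poly_0_coeff_0)
  also have "\<dots> = g x" using poly_PT[OF g, of y x 0] by simp
  finally show "Q 0 y g x = g x" .
qed

lemma cauchy:
  assumes g: "g \<in> V"
  shows "Q j (y1 + y2) g x = (\<Sum>l\<le>j. Q (j - l) y1 (Q l y2 g) x)"
proof -
  define R where "R = (\<Sum>l<Dn. Polynomial.monom 1 l * PT y1 (Q l y2 g) x)"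
  have "PT (y1 + y2) g x = R"
  proof (rule poly_eq_on_nat)
    fix n
    have "poly (PT (y1 + y2) g x) (of_nat n) = g ((x + of_nat n *s y1) + of_nat n *s y2)"
      using poly_PT[OF g] by (simp add: vector_add_ldistrib add.assoc)
    also have "\<dots> = (\<Sum>l<Dn. of_nat n ^ l * Q l y2 g (x + of_nat n *s y1))"
      using poly_PT[OF g, of y2 "x + of_nat n *s y1" n] poly_PT_sum by simp
    also have "\<dots> = (\<Sum>l<Dn. of_nat n ^ l * poly (PT y1 (Q l y2 g) x) (of_nat n))"
      using poly_PT[OF Q_V[OF g]] by simp
    also have "\<dots> = poly R (of_nat n)"
      by (simp add: R_def poly_sum poly_monom)
    finally show "poly (PT (y1 + y2) g x) (of_nat n) = poly R (of_nat n)" .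
  qed
  then have "Q j (y1 + y2) g x = Polynomial.coeff R j" by (simp add: Q_def)
  also have "\<dots> = (\<Sum>l<Dn. if j < l then 0 else Q (j - l) y1 (Q l y2 g) x)"
    unfolding R_def coeff_sum by (intro sum.cong refl) (simp add: coeff_monom_mult Q_apply)
  also have "\<dots> = (\<Sum>l<Dn + j + 1. if j < l then 0 else Q (j - l) y1 (Q l y2 g) x)"
    by (rule sum.mono_neutral_left) (auto simp: Q_high Q_zero)
  also have "\<dots> = (\<Sum>l\<le>j. if j < l then 0 else Q (j - l) y1 (Q l y2 g) x)"
    by (rule sum.mono_neutral_right) auto
  also have "\<dots> = (\<Sum>l\<le>j. Q (j - l) y1 (Q l y2 g) x)" by simp
  finally show ?thesis .
qed

lemma Q_double:
  assumes g: "g \<in> V"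
  shows "Q j (2 *s y) g x = 2 ^ j * Q j y g x"
proof -
  have "PT (2 *s y) g x = pcompose (PT y g x) [:0, 2:]"
  proof (rule poly_eq_on_nat)
    fix n
    have "of_nat n *s (2 *s y) = of_nat (2 * n) *s y" by (simp add: vec_eq_iff mult.assoc mult.commute)
    then show "poly (PT (2 *s y) g x) (of_nat n) = poly (pcompose (PT y g x) [:0, 2:]) (of_nat n)"
      using poly_PT[OF g, of "2 *s y" x n] poly_PT[OF g, of y x "2 * n"] by (simp add: poly_pcompose mult.commute)
  qed
  then show ?thesis by (simp add: Q_def coeff_pcompose_scale)
qed

end




context tsetup
begin

lemma basis_exists: "\<exists>A. finite A \<and> fs.independent A \<and> fs.span A = V"
proof -
  obtain A where A: "A \<subseteq> B" "fs.independent A" "B \<subseteq> fs.span A"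
    using Vector_Spaces.vector_space.maximal_independent_subset[OF fvs, of B] by blast
  have "fs.span A \<subseteq> fs.span B" using A(1) by (rule fs.span_mono)
  moreover have "fs.span B \<subseteq> fs.span A"
    using A(3) fs.span_minimal fs.subspace_span by blast
  ultimately have "fs.span A = V" using VB by blast
  moreover have "finite A" using A(1) finB finite_subset by blast
  ultimately show ?thesis using A(2) by blast
qed

lemma two_pow_ne: "j \<ge> 2 \<Longrightarrow> (2::'a) ^ j - 2 \<noteq> 0"
proof
  assume j: "j \<ge> 2" and e: "(2::'a) ^ j - 2 = 0"
  have "(2::nat) ^ j \<ge> 2 ^ 2" using j by (intro power_increasing) auto
  then have "(2::nat) ^ j \<noteq> 2" by simp
  moreover have "of_nat ((2::nat) ^ j) = (of_nat 2 :: 'a)" using e by simp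
  ultimately show False using of_nat_eq_iff by blast
qed

lemma coords:
  assumes finA: "finite A" and indA: "fs.independent A" and spA: "fs.span A = V"
  shows "\<exists>C. \<forall>b\<in>A. (\<forall>a. normal_poly (C b a)) \<and> (\<forall>y. Q j y b = (\<lambda>x. \<Sum>a\<in>A. C b a y * a x))"
proof (induction j rule: less_induct)
  case (less j)
  have AV: "b \<in> V" if "b \<in> A" for b using that spA fs.span_base by blast
  have rep: "v = (\<lambda>x. \<Sum>a\<in>A. fs.representation A v a * a x)" if "v \<in> V" for v
  proof -
    have "(\<Sum>a\<in>A. (\<lambda>x. fs.representation A v a * a x)) = v"
      using fs.sum_representation_eq[OF indA _ finA subset_refl, of v] that spA by simp
    then show ?thesis by (simp add: fun_sum_apply_eta)
  qed
  consider "j = 0" | "j = 1" | "j \<ge> 2" by linarith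
  then show ?case
  proof cases
    case 1
    define C where "C b a = (\<lambda>y::'a^'n. if a = b then (1::'a) else 0)" for b a :: "'a^'n \<Rightarrow> 'a"
    have "Q j y b = (\<lambda>x. \<Sum>a\<in>A. C b a y * a x)" if b: "b \<in> A" for b y
    proof
      fix x
      have e: "(\<lambda>a. C b a y * a x) = (\<lambda>a. if a = b then b x else 0)" by (auto simp: C_def)
      have "(\<Sum>a\<in>A. C b a y * a x) = (\<Sum>a\<in>A. if a = b then b x else 0)" by (simp only: e)
      also have "\<dots> = b x" using b finA by simp
      finally have "(\<Sum>a\<in>A. C b a y * a x) = b x" .
      then show "Q j y b x = (\<Sum>a\<in>A. C b a y * a x)" using Q0[OF AV[OF b]] 1 by simp
    qed
    moreover have "normal_poly (C b a)" for b a unfolding C_def by (rule np_const)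
    ultimately show ?thesis by blast
  next
    case 2
    define C where "C b a = (\<lambda>y. fs.representation A (Q 1 y b) a)" for b a
    have "Q j y b = (\<lambda>x. \<Sum>a\<in>A. C b a y * a x)" if b: "b \<in> A" for b y
      using rep[OF Q_V[OF AV[OF b]]] 2 by (simp add: C_def)
    moreover have "normal_poly (C b a)" if b: "b \<in> A" for b a
    proof (rule np_additive)
      show "additive_fun (C b a)" unfolding additive_fun_def
      proof (intro allI)
        fix y1 y2
        have "Q 1 (y1 + y2) b = Q 1 y1 b + Q 1 y2 b"
        proof
          fix x
          have "Q 1 (y1 + y2) b x = (\<Sum>l\<le>1. Q (1 - l) y1 (Q l y2 b) x)"
            by (rule cauchy[OF AV[OF b]])
          also have "\<dots> = Q 1 y1 (Q 0 y2 b) x + Q 0 y1 (Q 1 y2 b) x" by simp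
          also have "\<dots> = Q 1 y1 b x + Q 1 y2 b x"
            using Q0[OF AV[OF b]] Q0[OF Q_V[OF AV[OF b]]] by simp
          finally show "Q 1 (y1 + y2) b x = (Q 1 y1 b + Q 1 y2 b) x" by simp
        qed
        then show "C b a (y1 + y2) = C b a y1 + C b a y2"
          unfolding C_def using fs.representation_add[OF indA] Q_V[OF AV[OF b]] spA by simp
      qed
    qed
    ultimately show ?thesis by blast
  next
    case 3
    have "\<forall>l\<in>{..<j}. \<exists>C. \<forall>b\<in>A. (\<forall>a. normal_poly (C b a)) \<and> (\<forall>y. Q l y b = (\<lambda>x. \<Sum>a\<in>A. C b a y * a x))"
      using less by blast
    from bchoice[OF this] obtain CC where CC0: "\<forall>l\<in>{..<j}. \<forall>b\<in>A. (\<forall>a. normal_poly (CC l b a)) \<and> (\<forall>y. Q l y b = (\<lambda>x. \<Sum>a\<in>A. CC l b a y * a x))"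
      by blast
    have CC: "\<And>l b. l < j \<Longrightarrow> b \<in> A \<Longrightarrow> (\<forall>a. normal_poly (CC l b a)) \<and> (\<forall>y. Q l y b = (\<lambda>x. \<Sum>a\<in>A. CC l b a y * a x))"
      using CC0 by blast
    define C where "C b a = (\<lambda>y. inverse ((2::'a) ^ j - 2) * (\<Sum>l\<in>{1..<j}. \<Sum>a'\<in>A. CC l b a' y * CC (j - l) a' a y))" for b a
    have "normal_poly (C b a)" if b: "b \<in> A" for b a
      unfolding C_def
      by (intro np_scale np_sum finite_atLeastLessThan finA np_mult) (use CC b 3 in auto)
    moreover have "Q j y b = (\<lambda>x. \<Sum>a\<in>A. C b a y * a x)" if b: "b \<in> A" for b y
    proof
      fix x
      have bV: "b \<in> V" using AV[OF b] .
      define S where "S = (\<Sum>l\<in>{1..<j}. Q (j - l) y (Q l y b) x)"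
      have yy: "y + y = 2 *s y" by (simp add: vec_eq_iff mult_2[symmetric])
      have "2 ^ j * Q j y b x = Q j (y + y) b x"
        using Q_double[OF bV, of j y x] by (simp only: yy)
      also have "\<dots> = (\<Sum>l\<le>j. Q (j - l) y (Q l y b) x)" by (rule cauchy[OF bV])
      also have "\<dots> = (\<Sum>l\<in>insert 0 (insert j {1..<j}). Q (j - l) y (Q l y b) x)"
        using 3 by (intro sum.cong) auto
      also have "\<dots> = Q j y (Q 0 y b) x + (Q 0 y (Q j y b) x + S)"
        using 3 by (simp add: S_def)
      also have "\<dots> = 2 * Q j y b x + S" using Q0[OF bV] Q0[OF Q_V[OF bV]] by simp
      finally have eq: "(2 ^ j - 2) * Q j y b x = S" by (simp add: algebra_simps)
      have "S = (\<Sum>l\<in>{1..<j}. \<Sum>a'\<in>A. CC l b a' y * Q (j - l) y a' x)"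
        unfolding S_def
      proof (intro sum.cong refl)
        fix l assume l: "l \<in> {1..<j}"
        then have "Q l y b = (\<lambda>x. \<Sum>a'\<in>A. CC l b a' y * a' x)" using CC b by auto
        then show "Q (j - l) y (Q l y b) x = (\<Sum>a'\<in>A. CC l b a' y * Q (j - l) y a' x)"
          by (simp add: Q_lin)
      qed
      also have "\<dots> = (\<Sum>l\<in>{1..<j}. \<Sum>a'\<in>A. CC l b a' y * (\<Sum>a\<in>A. CC (j - l) a' a y * a x))"
      proof (intro sum.cong refl)
        fix l a' assume l: "l \<in> {1..<j}" and a': "a' \<in> A"
        have "j - l < j" using l by auto
        then have "Q (j - l) y a' = (\<lambda>x. \<Sum>a\<in>A. CC (j - l) a' a y * a x)" using CC a' by blast
        then show "CC l b a' y * Q (j - l) y a' x = CC l b a' y * (\<Sum>a\<in>A. CC (j - l) a' a y * a x)"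
          by simp
      qed
      also have "\<dots> = (\<Sum>l\<in>{1..<j}. \<Sum>a'\<in>A. \<Sum>a\<in>A. CC l b a' y * CC (j - l) a' a y * a x)"
        by (simp add: sum_distrib_left mult.assoc)
      also have "\<dots> = (\<Sum>l\<in>{1..<j}. \<Sum>a\<in>A. \<Sum>a'\<in>A. CC l b a' y * CC (j - l) a' a y * a x)"
        by (rule sum.cong[OF refl]) (rule sum.swap)
      also have "\<dots> = (\<Sum>a\<in>A. \<Sum>l\<in>{1..<j}. \<Sum>a'\<in>A. CC l b a' y * CC (j - l) a' a y * a x)"
        by (rule sum.swap)
      also have "\<dots> = (\<Sum>a\<in>A. (\<Sum>l\<in>{1..<j}. \<Sum>a'\<in>A. CC l b a' y * CC (j - l) a' a y) * a x)"
        by (simp add: sum_distrib_right)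
      finally have "S = (\<Sum>a\<in>A. (\<Sum>l\<in>{1..<j}. \<Sum>a'\<in>A. CC l b a' y * CC (j - l) a' a y) * a x)" .
      moreover have "Q j y b x = S / (2 ^ j - 2)"
        using eq two_pow_ne[OF 3] by (simp add: eq_divide_eq mult.commute)
      ultimately have "Q j y b x = inverse (2 ^ j - 2) * (\<Sum>a\<in>A. (\<Sum>l\<in>{1..<j}. \<Sum>a'\<in>A. CC l b a' y * CC (j - l) a' a y) * a x)"
        by (simp add: divide_inverse mult.commute)
      then show "Q j y b x = (\<Sum>a\<in>A. C b a y * a x)"
        by (simp add: C_def sum_distrib_left sum_distrib_right mult.assoc)
    qed
    ultimately show ?thesis by blast
  qed
qed

lemma final: "f \<in> V \<Longrightarrow> normal_poly f"
proof -
  assume fV: "f \<in> V"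
  obtain A where A: "finite A" "fs.independent A" "fs.span A = V" using basis_exists by blast
  have "\<forall>l. \<exists>C. \<forall>b\<in>A. (\<forall>a. normal_poly (C b a)) \<and> (\<forall>y. Q l y b = (\<lambda>x. \<Sum>a\<in>A. C b a y * a x))"
    using coords[OF A] by blast
  from choice[OF this] obtain CC where CC0: "\<forall>l. \<forall>b\<in>A. (\<forall>a. normal_poly (CC l b a)) \<and> (\<forall>y. Q l y b = (\<lambda>x. \<Sum>a\<in>A. CC l b a y * a x))"
    by blast
  have CC: "\<And>l b. b \<in> A \<Longrightarrow> (\<forall>a. normal_poly (CC l b a)) \<and> (\<forall>y. Q l y b = (\<lambda>x. \<Sum>a\<in>A. CC l b a y * a x))"
    using CC0 by blast
  define r where "r b = fs.representation A f b" for b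
  have frep: "f = (\<lambda>x. \<Sum>b\<in>A. r b * b x)"
  proof -
    have "(\<Sum>a\<in>A. (\<lambda>x. fs.representation A f a * a x)) = f"
      using fs.sum_representation_eq[OF A(2) _ A(1) subset_refl, of f] fV A(3) by simp
    then show ?thesis by (simp add: fun_sum_apply_eta r_def)
  qed
  have fy: "f y = (\<Sum>l<Dn. \<Sum>b\<in>A. r b * (\<Sum>a\<in>A. CC l b a y * a 0))" for y
  proof -
    have "f y = f (0 + of_nat 1 *s y)" by simp
    also have "\<dots> = poly (PT y f 0) (of_nat 1)" using poly_PT[OF fV, of y 0 1] by simp
    also have "\<dots> = (\<Sum>l<Dn. Q l y f 0)" by (simp add: poly_PT_sum)
    also have "\<dots> = (\<Sum>l<Dn. \<Sum>b\<in>A. r b * Q l y b 0)"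
      by (subst frep) (simp add: Q_lin)
    also have "\<dots> = (\<Sum>l<Dn. \<Sum>b\<in>A. r b * (\<Sum>a\<in>A. CC l b a y * a 0))"
      using CC by (intro sum.cong refl) auto
    finally show ?thesis .
  qed
  have np: "normal_poly (\<lambda>y. \<Sum>l<Dn. \<Sum>b\<in>A. r b * (\<Sum>a\<in>A. CC l b a y * a 0))"
    by (intro np_sum finite_lessThan A(1) np_scale np_mult np_const) (use CC in auto)
  have "f = (\<lambda>y. \<Sum>l<Dn. \<Sum>b\<in>A. r b * (\<Sum>a\<in>A. CC l b a y * a 0))" using fy by (rule ext)
  with np show "normal_poly f" by simp
qed

end

theorem mainTheorem15:
  fixes V :: "('a::field_char_0 ^ 'n \<Rightarrow> 'a) set" and f :: "'a ^ 'n \<Rightarrow> 'a"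
  assumes "fin_dim_fun_space V"
    and "\<And>h g. g \<in> V \<Longrightarrow> transl h g \<in> V"
    and "\<And>P g. invertible P \<Longrightarrow> g \<in> V \<Longrightarrow> lin_change P g \<in> V"
    and "f \<in> V"
  shows "normal_poly f"
proof -
  obtain B where B: "finite B" "V = {(\<lambda>x. \<Sum>b\<in>B. c b * b x) | c. True}"
    using assms(1) unfolding fin_dim_fun_space_def by blast
  have "fs.span B = range (\<lambda>u. \<Sum>v\<in>B. (\<lambda>x. u v * v x))" by (rule fs.span_finite[OF B(1)])
  then have VB: "V = fs.span B" using B(2) by (auto simp: fun_sum_apply_eta)
  interpret tsetup V B
  proof
    show "finite B" by (rule B(1))
    show "V = fs.span B" by (rule VB)
    show "(\<lambda>x. g (x + h)) \<in> V" if "g \<in> V" for h g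
      using assms(2)[OF that, of h] by (simp add: transl_def)
    show "(\<lambda>x. g (c *s x)) \<in> V" if "c \<noteq> 0" "g \<in> V" for c g
      using assms(3)[OF invertible_mat[OF that(1)] that(2)] by (simp add: lin_change_def mat_mult_vec)
  qed
  show ?thesis using final assms(4) by blast
qed


end
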